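(* Let $k>0$ and consider the system of ODEs, in cylindrical coordinates $(r,\theta,z)$ on $\mathbb{R}^3$ with momenta $p_R,p_S$, \[ \dot r = p_R,\quad \dot\theta = \frac{p_S}{r^2},\quad \dot z = \frac{p_S}{2},\quad \dot p_R = \frac{p_S^2}{r^3} - \frac{2kr^3}{(r^4+16z^2)^{3/2}},\quad \dot p_S = -\frac{8kr^2 z}{(r^4+16z^2)^{3/2}}, \] with first integrals $H = \frac12\big(p_R^2+\frac{p_S^2}{r^2}\big) - \frac{k}{\sqrt{r^4+16z^2}}$ and $F_3 = (2zp_R-rp_S)^2 + 4z^2\big(\frac{p_S^2}{r^2}+\frac{2k}{\sqrt{r^4+16z^2}}\big)$. Suppose $J := \sqrt{k^2+2HF_3} = 0$ and set $z_0 = \frac{k}{4|H|}$. Then the trajectories of non-stationary solutions are curves monotone in $z$ and in $\theta$ which, parametrized by $z$, have the form \[ r(z) = \Big(2\,\frac{z_0^2-z^2}{z_0}\Big)^{1/2},\qquad \theta(z) = \frac12\log\frac{z_0+z}{z_0-z} + \theta(0),\qquad |z|\le z_0. \] These solutions connect the stationary points $(r,z)=(0,\pm z_0)$ and take infinite time to approach them, i.e. $t(z)\to\pm\infty$ as $z\to\pm z_0$.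
   Context: The system describes nonholonomic motion on the Heisenberg group in the potential $-k/\sqrt{r^4+16z^2}$ in cylindrical coordinates $x=r\cos\theta$, $y=r\sin\theta$. $H$ and $F_3$ are constant along solutions, $F_3\ge0$, and $k^2+2HF_3\ge 0$. *)

theory Defs
  imports "HOL-Analysis.Analysis"
begin

definition Hf :: "real \<Rightarrow> real \<Rightarrow> real \<Rightarrow> real \<Rightarrow> real \<Rightarrow> real" where
  "Hf k r z pR pS = (pR^2 + pS^2 / r^2) / 2 - k / sqrt (r^4 + 16 * z^2)"

definition F3f :: "real \<Rightarrow> real \<Rightarrow> real \<Rightarrow> real \<Rightarrow> real \<Rightarrow> real" where
  "F3f k r z pR pS = (2 * z * pR - r * pS)^2
      + 4 * z^2 * (pS^2 / r^2 + 2 * k / sqrt (r^4 + 16 * z^2))"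

text \<open>A solution of the ODE system on the set I (r > 0, so cylindrical coordinates are valid).\<close>
definition is_solution ::
  "real \<Rightarrow> real set \<Rightarrow> (real \<Rightarrow> real) \<Rightarrow> (real \<Rightarrow> real) \<Rightarrow> (real \<Rightarrow> real)
     \<Rightarrow> (real \<Rightarrow> real) \<Rightarrow> (real \<Rightarrow> real) \<Rightarrow> bool" where
  "is_solution k I r \<theta> z pR pS \<longleftrightarrow>
     (\<forall>t\<in>I. r t > 0
        \<and> (r has_real_derivative pR t) (at t)
        \<and> (\<theta> has_real_derivative pS t / (r t)^2) (at t)
        \<and> (z has_real_derivative pS t / 2) (at t)
        \<and> (pR has_real_derivative
              (pS t)^2 / (r t)^3 - 2 * k * (r t)^3 / ((r t)^4 + 16 * (z t)^2) powr (3/2)) (at t)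
        \<and> (pS has_real_derivative
              - 8 * k * (r t)^2 * z t / ((r t)^4 + 16 * (z t)^2) powr (3/2)) (at t))"

definition maximal_solution ::
  "real \<Rightarrow> real set \<Rightarrow> (real \<Rightarrow> real) \<Rightarrow> (real \<Rightarrow> real) \<Rightarrow> (real \<Rightarrow> real)
     \<Rightarrow> (real \<Rightarrow> real) \<Rightarrow> (real \<Rightarrow> real) \<Rightarrow> bool" where
  "maximal_solution k I r \<theta> z pR pS \<longleftrightarrow>
     is_interval I \<and> open I \<and> I \<noteq> {} \<and> is_solution k I r \<theta> z pR pS \<and>
     (\<forall>J r' \<theta>' z' pR' pS'. is_interval J \<and> open J \<and> I \<subseteq> J
        \<and> is_solution k J r' \<theta>' z' pR' pS'
        \<and> (\<forall>t\<in>I. r' t = r t \<and> \<theta>' t = \<theta> t \<and> z' t = z t \<and> pR' t = pR t \<and> pS' t = pS t)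
        \<longrightarrow> J = I)"

end

theory Submission
  imports Defs "HOL-Real_Asymp.Real_Asymp"
begin


lemma sos_identity:
  fixes k r z a b u :: real
  shows "k^2 + 2*((a^2+b^2)/2 - k*u) * ((2*z*a - r^2*b)^2 + 4*z^2*(b^2 + 2*k*u))
    = (k*r^2*u + b*(4*z*a - r^2*b))^2 + (2*z*(a^2-b^2) - r^2*a*b)^2
      + k^2*(1 - r^4*u^2 - 16*z^2*u^2)"
  by (simp add: field_simps power2_eq_square power4_eq_xxxx)

lemma pointwise:
  fixes k r z a p h :: real
  assumes k: "k>0" and r: "r>0" and h: "h = Hf k r z a p" and J: "k^2 + 2*h*F3f k r z a p = 0"
  shows "h < 0 \<and> \<bar>z\<bar> < -k/(4*h) \<and> r^2 = 2*((-k/(4*h))^2-z^2)/(-k/(4*h))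
     \<and> p^2 = k*(((-k/(4*h))^2-z^2)/((-k/(4*h))^2+z^2))^2 \<and> a = - z*p/((-k/(4*h))*r)"
proof -
  define s where "s = sqrt (r^4+16*z^2)"
  have r4: "r^4 > 0" using r by simp
  have s0: "s > 0" unfolding s_def using r4 by (intro real_sqrt_gt_zero) (simp add: add_pos_nonneg)
  have s2: "s^2 = r^4+16*z^2" unfolding s_def using r4
    by (simp add: add_pos_nonneg less_imp_le)
  define b where "b = p/r"
  define u where "u = 1/s"
  have pb: "p = b*r" using r by (simp add: b_def)
  have d0: "r^4 + 16*z^2 > 0" using r4 by (simp add: add_pos_nonneg)
  have uu: "u^2 = 1/(r^4+16*z^2)" by (simp add: u_def power_divide s2)
  have u1: "1 - r^4*u^2 - 16*z^2*u^2 = 0"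
  proof -
    have "1 - r^4*u^2 - 16*z^2*u^2 = 1 - (r^4+16*z^2)*u^2" by (simp add: algebra_simps)
    also have "\<dots> = 0" using d0 by (simp add: uu)
    finally show ?thesis .
  qed
  have hH: "h = (a^2+b^2)/2 - k*u" unfolding h Hf_def u_def s_def[symmetric] using r
    by (simp add: b_def power_divide)
  have FF: "F3f k r z a p = (2*z*a - r^2*b)^2 + 4*z^2*(b^2 + 2*k*u)" unfolding F3f_def u_def s_def[symmetric] using r
    by (simp add: b_def power_divide power2_eq_square)
  have sq: "(k*r^2*u + b*(4*z*a - r^2*b))^2 + (2*z*(a^2-b^2) - r^2*a*b)^2 = 0"
    using J sos_identity[of k a b u z r] unfolding hH[symmetric] FF[symmetric] u1 by simp
  have X1: "k*r^2*u + b*(4*z*a - r^2*b) = 0" and X2: "2*z*(a^2-b^2) - r^2*a*b = 0"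
    using sq by (simp_all add: sum_power2_eq_zero_iff)
  have kru: "k*r^2*u > 0" using k r s0 by (simp add: u_def)
  have fac: "(4*z*a - (r^2+s)*b)*(4*z*a - (r^2-s)*b) = 8*z*(2*z*(a^2-b^2) - r^2*a*b)"
    using s2 by (simp add: algebra_simps power2_eq_square power4_eq_xxxx)
  have "4*z*a \<noteq> (r^2+s)*b"
  proof
    assume "4*z*a = (r^2+s)*b"
    then have "k*r^2*u + s*b^2 = 0" using X1 by (simp add: algebra_simps power2_eq_square)
    moreover have "s*b^2 \<ge> 0" using s0 by simp
    ultimately show False using kru by linarith
  qed
  then have e1: "4*z*a = (r^2-s)*b" using fac X2 by simp
  have "k*r^2*u = s*b^2"
  proof -
    have "k*r^2*u = b*(r^2*b - 4*z*a)" using X1 by (simp add: algebra_simps)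
    also have "\<dots> = b*(r^2*b - (r^2-s)*b)" using e1 by simp
    also have "\<dots> = s*b^2" by (simp add: algebra_simps power2_eq_square)
    finally show ?thesis .
  qed
  then have b2: "b^2 = k*r^2/s^2" using s0 by (simp add: u_def field_simps power2_eq_square)
  have a1: "a*(r^2+s) = -4*z*b"
  proof (cases "z = 0")
    case True
    then have "a = 0 \<or> b = 0" using X2 r by simp
    moreover have "b \<noteq> 0" using X1 kru by auto
    ultimately show ?thesis using True by auto
  next
    case False
    have "4*z*(a*(r^2+s)) = (4*z*a)*(r^2+s)" by simp
    also have "\<dots> = (r^2-s)*b*(r^2+s)" using e1 by simp
    also have "\<dots> = (r^4 - s^2)*b" by (simp add: algebra_simps power2_eq_square power4_eq_xxxx)
    also have "\<dots> = 4*z*(-4*z*b)" using s2 by (simp add: algebra_simps power2_eq_square)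
    finally have "4*z*(a*(r^2+s)) = 4*z*(-4*z*b)" .
    then show ?thesis using False by (metis mult_left_cancel mult_eq_0_iff zero_neq_numeral)
  qed
  have rs: "r^2 + s > 0" using s0 r by (simp add: add_pos_pos)
  have a2: "a^2*(r^2+s) = (s-r^2)*b^2"
  proof -
    have "a^2*(r^2+s)^2 = 16*z^2*b^2" using a1 by (simp add: power_mult_distrib[symmetric] algebra_simps)
    also have "\<dots> = (s-r^2)*(r^2+s)*b^2" using s2 by (simp add: algebra_simps power2_eq_square power4_eq_xxxx)
    finally show ?thesis using rs by (simp add: power2_eq_square)
  qed
  have hv: "h*(r^2+s) = -k"
  proof -
    have h2: "2*h = a^2+b^2 - 2*k*u" using hH by simp
    have e3: "2*h*(r^2+s) = a^2*(r^2+s) + b^2*(r^2+s) - 2*k*u*(r^2+s)" unfolding h2 by (simp add: algebra_simps)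
    have e4: "a^2*(r^2+s) + b^2*(r^2+s) = 2*(b^2* s)" using a2 by (simp add: algebra_simps)
    have e5: "2*(b^2* s) - 2*k*u*(r^2+s) = -2*k" using b2 s0 by (simp add: u_def field_simps power2_eq_square)
    have "2*h*(r^2+s) = -2*k" using e3 e4 e5 by linarith
    then show ?thesis by simp
  qed
  have hneg: "h < 0" using hv rs k by (smt (verit) mult_nonneg_nonneg)
  define z0 where "z0 = -k/(4*h)"
  have z0v: "z0 = (r^2+s)/4" unfolding z0_def using hv hneg by (simp add: field_simps)
  have z0p: "z0 > 0" using rs z0v by simp
  have sv: "s = 4*z0 - r^2" using z0v by simp
  have r2: "r^2 = 2*(z0^2-z^2)/z0"
  proof -
    have "(4*z0 - r^2)^2 = r^4 + 16*z^2" using s2 sv by simp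
    then have "16*z0^2 - 8*z0*r^2 = 16*z^2" by (simp add: algebra_simps power2_eq_square power4_eq_xxxx)
    then show ?thesis using z0p by (simp add: field_simps)
  qed
  have zz: "z^2 < z0^2" using r2 z0p r by (smt (verit) divide_nonpos_pos zero_less_power)
  then have "\<bar>z\<bar>^2 < z0^2" by simp
  then have az: "\<bar>z\<bar> < z0" using power_less_imp_less_base[of "\<bar>z\<bar>" 2 z0] z0p by simp
  have "s = 4*z0 - 2*(z0^2-z^2)/z0" using sv r2 by simp
  also have "\<dots> = 2*(z0^2+z^2)/z0" using z0p by (simp add: field_simps power2_eq_square)
  finally have sv2: "s = 2*(z0^2+z^2)/z0" .
  have p2: "p^2 = k*((z0^2-z^2)/(z0^2+z^2))^2"
  proof -
    have "p^2 = b^2*r^2" using pb by (simp add: power_mult_distrib)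
    also have "\<dots> = k*(r^2)^2/s^2" using b2 by (simp add: power2_eq_square)
    also have "\<dots> = k*(r^2/s)^2" by (simp add: power_divide)
    also have "r^2/s = (z0^2-z^2)/(z0^2+z^2)" unfolding r2 sv2
    proof -
      have pz: "z0^2+z^2 > 0" using z0p by (simp add: add_pos_nonneg)
      show "(2*(z0^2-z^2)/z0)/(2*(z0^2+z^2)/z0) = (z0^2-z^2)/(z0^2+z^2)"
        using z0p pz by (simp add: divide_simps) (simp add: algebra_simps)
    qed
    finally show ?thesis .
  qed
  have av: "a = - z*p/(z0*r)"
  proof -
    have "a = -4*z*b/(r^2+s)" using a1 rs by (simp add: field_simps)
    also have "\<dots> = -4*z*b/(4*z0)" using z0v by (simp add: mult.commute)
    also have "\<dots> = - z*p/(z0*r)" using z0p r by (simp add: b_def field_simps)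
    finally show ?thesis .
  qed
  show ?thesis using hneg az r2 p2 av unfolding z0_def by simp
qed



lemma sqrt_deriv_q:
  fixes r z pR pS :: "real \<Rightarrow> real"
  assumes dr: "(r has_real_derivative pR t) (at t)"
    and dz: "(z has_real_derivative pS t / 2) (at t)"
    and rp: "r t > 0"
  shows "((\<lambda>t. sqrt ((r t)^4 + 16 * (z t)^2)) has_real_derivative
     (4*(r t)^3*pR t + 16*z t*pS t) / (2* sqrt ((r t)^4 + 16 * (z t)^2))) (at t)"
proof -
  have q0: "(r t)^4 + 16 * (z t)^2 > 0" using rp by (simp add: add_pos_nonneg)
  have dq: "((\<lambda>t. (r t)^4 + 16 * (z t)^2) has_real_derivative (4*(r t)^3*pR t + 16*z t*pS t)) (at t)"
    apply (rule DERIV_cong)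
    apply (rule derivative_eq_intros dr dz refl)+
    apply (simp add: algebra_simps)
    done
  show ?thesis
    apply (rule DERIV_cong)
    apply (rule DERIV_chain2[of sqrt, OF DERIV_real_sqrt[OF q0] dq])
    apply (simp add: field_simps)
    done
qed

lemma H_deriv:
  fixes r z pR pS :: "real \<Rightarrow> real"
  assumes dr: "(r has_real_derivative pR t) (at t)"
    and dz: "(z has_real_derivative pS t / 2) (at t)"
    and dpR: "(pR has_real_derivative (pS t)^2 / (r t)^3 - 2 * k * (r t)^3 / (sqrt ((r t)^4 + 16 * (z t)^2))^3) (at t)"
    and dpS: "(pS has_real_derivative - 8 * k * (r t)^2 * z t / (sqrt ((r t)^4 + 16 * (z t)^2))^3) (at t)"
    and rp: "r t > 0"
  shows "((\<lambda>t. Hf k (r t) (z t) (pR t) (pS t)) has_real_derivative 0) (at t)"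
proof -
  have q0: "(r t)^4 + 16 * (z t)^2 > 0" using rp by (simp add: add_pos_nonneg)
  have side: "(2::real) \<noteq> 0" "(r t)^2 \<noteq> 0" "(r t)^4 + 16 * (z t)^2 \<noteq> 0" "sqrt ((r t)^4 + 16 * (z t)^2) \<noteq> 0" using q0 rp by auto
  define S where "S = sqrt ((r t)^4 + 16 * (z t)^2)"
  have Sp: "S > 0" unfolding S_def using q0 by simp
  have S2: "S^2 = (r t)^4 + 16 * (z t)^2" unfolding S_def using q0 by simp
  note ds = sqrt_deriv_q[of r pR t z pS, OF dr dz rp]
  show ?thesis
  unfolding Hf_def
  apply (rule DERIV_cong)
  apply (rule ds derivative_eq_intros dr dz dpR dpS refl | rule side)+
  apply (simp only: S_def[symmetric])
  using Sp rp apply (simp add: field_simps)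
  apply (simp add: eval_nat_numeral algebra_simps)
  done
qed
lemma F_deriv:
  fixes r z pR pS :: "real \<Rightarrow> real"
  assumes dr: "(r has_real_derivative pR t) (at t)"
    and dz: "(z has_real_derivative pS t / 2) (at t)"
    and dpR: "(pR has_real_derivative (pS t)^2 / (r t)^3 - 2 * k * (r t)^3 / (sqrt ((r t)^4 + 16 * (z t)^2))^3) (at t)"
    and dpS: "(pS has_real_derivative - 8 * k * (r t)^2 * z t / (sqrt ((r t)^4 + 16 * (z t)^2))^3) (at t)"
    and rp: "r t > 0"
  shows "((\<lambda>t. F3f k (r t) (z t) (pR t) (pS t)) has_real_derivative 0) (at t)"
proof -
  have q0: "(r t)^4 + 16 * (z t)^2 > 0" using rp by (simp add: add_pos_nonneg)
  have side: "(2::real) \<noteq> 0" "(r t)^2 \<noteq> 0" "(r t)^4 + 16 * (z t)^2 \<noteq> 0" "sqrt ((r t)^4 + 16 * (z t)^2) \<noteq> 0" using q0 rp by auto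
  define S where "S = sqrt ((r t)^4 + 16 * (z t)^2)"
  have Sp: "S > 0" unfolding S_def using q0 by simp
  have S2: "S^2 = (r t)^4 + 16 * (z t)^2" unfolding S_def using q0 by simp
  note ds = sqrt_deriv_q[of r pR t z pS, OF dr dz rp]
  have "((\<lambda>t. F3f k (r t) (z t) (pR t) (pS t)) has_real_derivative
      8*k*z t*pS t/S - 8*k*z t*pS t*((r t)^4 + 16 * (z t)^2)/S^3) (at t)"
  unfolding F3f_def
  apply (rule DERIV_cong)
  apply (rule ds derivative_eq_intros dr dz dpR dpS refl | rule side)+
  apply (simp only: S_def[symmetric])
  using Sp rp apply (simp add: field_simps)
  apply (simp add: eval_nat_numeral algebra_simps)
  done
  moreover have "8*k*z t*pS t/S - 8*k*z t*pS t*((r t)^4 + 16 * (z t)^2)/S^3 = 0"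
  proof -
    have "S^3 = S * ((r t)^4 + 16 * (z t)^2)" using S2 by (simp add: power3_eq_cube power2_eq_square)
    then show ?thesis using Sp q0 by simp
  qed
  ultimately show ?thesis by simp
qed

lemma powr32: "(x::real) > 0 \<Longrightarrow> x powr (3/2) = (sqrt x)^3"
proof -
  assume x: "x > 0"
  have "x powr (3/2) = x powr (1 + 1/2)" by simp
  also have "\<dots> = x powr 1 * x powr (1/2)" by (rule powr_add)
  also have "\<dots> = (sqrt x)^3" using x by (simp add: powr_half_sqrt power3_eq_cube)
  finally show ?thesis .
qed

lemma conserved:
  assumes sol: "is_solution k I r \<theta> z pR pS" and iv: "is_interval I"
  shows "\<exists>c. \<forall>t\<in>I. Hf k (r t) (z t) (pR t) (pS t) = c"
    and "\<exists>c. \<forall>t\<in>I. F3f k (r t) (z t) (pR t) (pS t) = c"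
proof -
  have D: "((\<lambda>t. Hf k (r t) (z t) (pR t) (pS t)) has_real_derivative 0) (at t) \<and>
        ((\<lambda>t. F3f k (r t) (z t) (pR t) (pS t)) has_real_derivative 0) (at t)" if t: "t \<in> I" for t
  proof -
    have rp: "r t > 0" and dr: "(r has_real_derivative pR t) (at t)"
      and dz: "(z has_real_derivative pS t / 2) (at t)"
      and dpR0: "(pR has_real_derivative
              (pS t)^2 / (r t)^3 - 2 * k * (r t)^3 / ((r t)^4 + 16 * (z t)^2) powr (3/2)) (at t)"
      and dpS0: "(pS has_real_derivative
              - 8 * k * (r t)^2 * z t / ((r t)^4 + 16 * (z t)^2) powr (3/2)) (at t)"
      using sol t unfolding is_solution_def by auto
    have q0: "(r t)^4 + 16 * (z t)^2 > 0" using rp by (simp add: add_pos_nonneg)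
    note pw = powr32[OF q0]
    have dpR: "(pR has_real_derivative (pS t)^2 / (r t)^3 - 2 * k * (r t)^3 / (sqrt ((r t)^4 + 16 * (z t)^2))^3) (at t)"
      using dpR0 unfolding pw .
    have dpS: "(pS has_real_derivative - 8 * k * (r t)^2 * z t / (sqrt ((r t)^4 + 16 * (z t)^2))^3) (at t)"
      using dpS0 unfolding pw .
    show ?thesis using H_deriv[of r pR t z pS k, OF dr dz dpR dpS rp] F_deriv[of r pR t z pS k, OF dr dz dpR dpS rp]
      by simp
  qed
  have cv: "convex I" using iv by (simp add: is_interval_convex)
  show "\<exists>c. \<forall>t\<in>I. Hf k (r t) (z t) (pR t) (pS t) = c"
    by (rule has_field_derivative_zero_constant[OF cv]) (use D in \<open>auto intro: has_field_derivative_at_within\<close>)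
  show "\<exists>c. \<forall>t\<in>I. F3f k (r t) (z t) (pR t) (pS t) = c"
    by (rule has_field_derivative_zero_constant[OF cv]) (use D in \<open>auto intro: has_field_derivative_at_within\<close>)
qed



definition Rc :: "real \<Rightarrow> real \<Rightarrow> real" where "Rc z0 z = sqrt (2 * (z0^2 - z^2) / z0)"
definition Pc :: "real \<Rightarrow> real \<Rightarrow> real \<Rightarrow> real \<Rightarrow> real" where
  "Pc k z0 e z = e * sqrt k * (z0^2 - z^2) / (z0^2 + z^2)"
definition PRc :: "real \<Rightarrow> real \<Rightarrow> real \<Rightarrow> real \<Rightarrow> real" where
  "PRc k z0 e z = - e * sqrt k * z * Rc z0 z / (2 * (z0^2 + z^2))"
definition Lc :: "real \<Rightarrow> real \<Rightarrow> real" where "Lc z0 z = ln ((z0 + z) / (z0 - z))"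

lemma Lc_deriv:
  assumes "z0 - zf t > 0" "z0 + zf t > 0" "(zf has_real_derivative D) (at t)"
  shows "((\<lambda>t. Lc z0 (zf t)) has_real_derivative 2*z0*D/(z0^2 - (zf t)^2)) (at t)"
proof -
  have sd: "z0 - zf t \<noteq> 0" "(z0 + zf t) / (z0 - zf t) > 0" using assms by auto
  have fa: "z0^2 - (zf t)^2 = (z0 - zf t)*(z0 + zf t)" by (simp add: algebra_simps power2_eq_square)
  have ne: "z0^2 - (zf t)^2 \<noteq> 0" unfolding fa using assms by simp
  show ?thesis
    unfolding Lc_def
    apply (rule DERIV_cong)
    apply (rule derivative_eq_intros assms(3) refl | rule sd)+
    unfolding fa using sd(1) assms(2) apply (simp add: divide_simps)
    apply (simp add: algebra_simps power2_eq_square)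
    done
qed

lemma ratio_deriv:
  assumes "(zf has_real_derivative D) (at t)" "z0^2 + (zf t)^2 \<noteq> 0"
  shows "((\<lambda>t. (z0^2 - (zf t)^2) / (z0^2 + (zf t)^2)) has_real_derivative -4*z0^2*zf t*D/(z0^2 + (zf t)^2)^2) (at t)"
  apply (rule DERIV_cong)
  apply (rule derivative_eq_intros assms refl)+
  using assms(2) apply (simp add: field_simps)
  apply (simp add: algebra_simps power2_eq_square eval_nat_numeral)
  done

lemma curve_point:
  fixes zf :: "real \<Rightarrow> real"
  assumes k: "k > 0" and z0: "z0 > 0" and e: "e = 1 \<or> e = -1"
    and zl: "\<bar>zf t\<bar> < z0" and dz: "(zf has_real_derivative Pc k z0 e (zf t) / 2) (at t)"
  shows "Rc z0 (zf t) > 0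
        \<and> ((\<lambda>t. Rc z0 (zf t)) has_real_derivative PRc k z0 e (zf t)) (at t)
        \<and> ((\<lambda>t. c + Lc z0 (zf t) / 2) has_real_derivative Pc k z0 e (zf t) / (Rc z0 (zf t))^2) (at t)
        \<and> ((\<lambda>t. PRc k z0 e (zf t)) has_real_derivative
              (Pc k z0 e (zf t))^2 / (Rc z0 (zf t))^3 - 2 * k * (Rc z0 (zf t))^3 / ((Rc z0 (zf t))^4 + 16 * (zf t)^2) powr (3/2)) (at t)
        \<and> ((\<lambda>t. Pc k z0 e (zf t)) has_real_derivative
              - 8 * k * (Rc z0 (zf t))^2 * zf t / ((Rc z0 (zf t))^4 + 16 * (zf t)^2) powr (3/2)) (at t)"
proof -
  define Z where "Z = zf t"
  define A where "A = z0^2 - Z^2"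
  define B where "B = z0^2 + Z^2"
  have "\<bar>Z\<bar>^2 < z0^2" using zl unfolding Z_def by (intro power_strict_mono) auto
  then have Ap: "A > 0" unfolding A_def by simp
  have Bp: "B > 0" using z0 unfolding B_def by (simp add: add_pos_nonneg)
  have zpm: "z0 + Z > 0" "z0 - Z > 0" using zl unfolding Z_def by auto
  define R where "R = Rc z0 Z"
  have Rp: "R > 0" unfolding R_def Rc_def A_def[symmetric] using Ap z0 by simp
  have R2: "R^2 = 2*A/z0" unfolding R_def Rc_def A_def[symmetric] using Ap z0 by simp
  have sk: "sqrt k ^ 2 = k" using k by simp
  have q: "R^4 + 16*Z^2 = (2*B/z0)^2"
  proof -
    have "R^4 = (R^2)^2" by simp
    then show ?thesis unfolding R2 A_def B_def using z0 by (simp add: field_simps) (simp add: algebra_simps power2_eq_square)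
  qed
  have qp: "(R^4 + 16*Z^2) powr (3/2) = (2*B/z0)^3"
    unfolding q using powr32[of "(2*B/z0)^2"] Bp z0 by simp
  have sd: "z0 \<noteq> 0" "(2::real) \<noteq> 0" "z0 - zf t \<noteq> 0" "z0 + zf t \<noteq> 0" "z0^2 + (zf t)^2 \<noteq> 0" "2*(z0^2 + (zf t)^2) \<noteq> 0"
    "(z0 + zf t) / (z0 - zf t) > 0"
    using z0 zpm Bp unfolding Z_def B_def by auto
  have AB: "A = 2*z0^2 - B" unfolding A_def B_def by simp
  define m where "m = sqrt k"
  have km: "k = m^2" unfolding m_def using k by simp
  have mp: "m > 0" unfolding m_def using k by simp
  have R3: "R^3 = R*(2*A/z0)" using R2 by (simp add: power3_eq_cube power2_eq_square)
  have R3a: "\<And>X. X / R^3 = X * R / (2*A/z0)^2"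
  proof -
    fix X
    have "R^4 = (2*A/z0)^2" using R2 by (metis power2_eq_square power4_eq_xxxx mult.assoc)
    moreover have "X / R^3 = X * R / R^4" using Rp by (simp add: field_simps eval_nat_numeral)
    ultimately show "X / R^3 = X * R / (2*A/z0)^2" by simp
  qed
  have e2: "e^2 = 1" using e by auto
  have AR: "A = z0*R^2/2" using R2 z0 by simp
  have PcZ: "Pc k z0 e Z = e * sqrt k * A / B" unfolding Pc_def A_def B_def by simp
  have dz': "(zf has_real_derivative e * sqrt k * A / B / 2) (at t)" using dz unfolding Z_def[symmetric] PcZ .
  have din: "((\<lambda>t. 2 * (z0^2 - (zf t)^2) / z0) has_real_derivative - 4 * Z * (e * sqrt k * A / B / 2) / z0) (at t)"
    apply (rule DERIV_cong)
    apply (rule derivative_eq_intros dz' refl | rule sd)+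
    apply (simp add: Z_def field_simps)
    done
  have arg: "2 * (z0^2 - Z^2) / z0 > 0" using Ap z0 unfolding A_def by simp
  have dR: "((\<lambda>t. Rc z0 (zf t)) has_real_derivative PRc k z0 e Z) (at t)"
    unfolding Rc_def
    apply (rule DERIV_cong)
    apply (rule DERIV_chain2[of sqrt, OF DERIV_real_sqrt[OF arg[unfolded Z_def]] din[unfolded Z_def]])
    apply (fold Z_def)
    apply (simp only: Rc_def[symmetric] R_def[symmetric] PRc_def)
    apply (simp only: AR B_def[symmetric])
    using Rp Bp z0 apply (simp add: field_simps power2_eq_square)
    done
  have dth: "((\<lambda>t. c + Lc z0 (zf t) / 2) has_real_derivative Pc k z0 e (zf t) / (Rc z0 (zf t))^2) (at t)"
    apply (rule DERIV_cong)
    apply (rule derivative_eq_intros Lc_deriv[OF zpm(2)[unfolded Z_def] zpm(1)[unfolded Z_def] dz'] refl | rule sd)+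
    apply (fold Z_def)
    apply (simp only: R_def[symmetric] R2 PcZ A_def[symmetric])
    using Bp z0 Ap apply (simp add: field_simps)
    done
  have dP: "((\<lambda>t. Pc k z0 e (zf t)) has_real_derivative
              - 8 * k * (Rc z0 (zf t))^2 * zf t / ((Rc z0 (zf t))^4 + 16 * (zf t)^2) powr (3/2)) (at t)"
    unfolding Pc_def
    apply (rule DERIV_cong)
    apply (rule derivative_eq_intros dz' refl | rule sd)+
    apply (fold Z_def)
    apply (simp only: R_def[symmetric] qp R2 A_def[symmetric] B_def[symmetric])
    apply (simp only: m_def[symmetric] km AB)
    using e Bp z0 mp apply (elim disjE; simp add: field_simps; simp add: algebra_simps eval_nat_numeral)
    done
  have dPR: "((\<lambda>t. PRc k z0 e (zf t)) has_real_derivative (Pc k z0 e (zf t))^2 / (Rc z0 (zf t))^3 - 2 * k * (Rc z0 (zf t))^3 / ((Rc z0 (zf t))^4 + 16 * (zf t)^2) powr (3/2)) (at t)"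
    unfolding PRc_def[of k z0 e "zf _"]
    apply (rule DERIV_cong)
    apply (rule derivative_eq_intros dz' dR refl | rule sd)+
    apply (fold Z_def)
    apply (simp only: R_def[symmetric] qp PcZ PRc_def R3a)
    apply (simp only: R3)
    apply (simp only: R_def[symmetric] A_def[symmetric] B_def[symmetric])
    apply (simp only: m_def[symmetric] km)
    using Bp Ap z0 mp Rp apply (simp add: field_simps)
    using A_def B_def e2 apply algebra
    done
  show ?thesis using Rp dR dth dPR dP unfolding R_def Z_def by simp
qed


lemma curve_solution:
  fixes zf :: "real \<Rightarrow> real"
  assumes k: "k > 0" and z0: "z0 > 0" and e: "e = 1 \<or> e = -1"
    and hz: "\<And>t. t \<in> J \<Longrightarrow> \<bar>zf t\<bar> < z0 \<and> (zf has_real_derivative Pc k z0 e (zf t) / 2) (at t)"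
  shows "is_solution k J (\<lambda>t. Rc z0 (zf t)) (\<lambda>t. c + Lc z0 (zf t) / 2) zf
           (\<lambda>t. PRc k z0 e (zf t)) (\<lambda>t. Pc k z0 e (zf t))"
  unfolding is_solution_def
proof
  fix t assume t: "t \<in> J"
  have zl: "\<bar>zf t\<bar> < z0" and dz: "(zf has_real_derivative Pc k z0 e (zf t) / 2) (at t)" using hz[OF t] by auto
  show "0 < Rc z0 (zf t) \<and>
         ((\<lambda>t. Rc z0 (zf t)) has_real_derivative PRc k z0 e (zf t)) (at t) \<and>
         ((\<lambda>t. c + Lc z0 (zf t) / 2) has_real_derivative Pc k z0 e (zf t) / (Rc z0 (zf t))\<^sup>2) (at t) \<and>
         (zf has_real_derivative Pc k z0 e (zf t) / 2) (at t) \<and>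
         ((\<lambda>t. PRc k z0 e (zf t)) has_real_derivative
          (Pc k z0 e (zf t))\<^sup>2 / Rc z0 (zf t) ^ 3 -
          2 * k * Rc z0 (zf t) ^ 3 / (Rc z0 (zf t) ^ 4 + 16 * (zf t)\<^sup>2) powr (3 / 2))
          (at t) \<and>
         ((\<lambda>t. Pc k z0 e (zf t)) has_real_derivative
          - 8 * k * (Rc z0 (zf t))\<^sup>2 * zf t / (Rc z0 (zf t) ^ 4 + 16 * (zf t)\<^sup>2) powr (3 / 2))
          (at t)"
    using curve_point[OF k z0 e zl dz, of c] dz by simp
qed



definition Kc :: "real \<Rightarrow> real" where "Kc w = w - (exp w - 1) / (exp w + 1)"
definition Zc :: "real \<Rightarrow> real \<Rightarrow> real" where "Zc z0 w = z0 * ((exp w - 1) / (exp w + 1))"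
definition Kinv :: "real \<Rightarrow> real" where "Kinv = inv Kc"

lemma tanh_bound: "\<bar>(exp w - 1) / (exp w + 1)\<bar> < (1::real)"
proof -
  have e0: "exp w > 0" by simp
  have p: "exp w + 1 > 0" using e0 by linarith
  have a: "(exp w - 1)/(exp w + 1) < 1" using p by (simp add: divide_less_eq)
  have b: "-1 < (exp w - 1)/(exp w + 1)" using e0 by (subst pos_less_divide_eq[OF p]) simp
  show ?thesis using a b by (simp only: abs_less_iff) simp
qed

lemma Kc_deriv: "(Kc has_real_derivative 1 - 2 * exp w / (exp w + 1)^2) (at w)"
proof -
  have p: "exp w + 1 \<noteq> 0" using exp_gt_zero[of w] by linarith
  show ?thesis
    unfolding Kc_def[abs_def]
    apply (rule DERIV_cong)
    apply (rule derivative_eq_intros refl | rule p)+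
    using p apply (simp add: field_simps power2_eq_square)
    done
qed

lemma Kc_deriv_pos: "1 - 2 * exp w / (exp w + 1)^2 > (0::real)"
proof -
  have e0: "exp w > 0" by simp
  have "exp w + 1 > 0" using e0 by linarith
  then have p: "(exp w + 1)^2 > 0" by simp
  have sq: "(exp w + 1)^2 = (exp w - 1)^2 + 4*exp w" by (simp add: power2_eq_square algebra_simps)
  have "(exp w - 1)^2 \<ge> 0" by simp
  then have "2 * exp w < (exp w + 1)^2" using sq e0 by linarith
  moreover have "exp w + 1 \<noteq> 0" using e0 by linarith
  ultimately show ?thesis using p by (simp add: field_simps)
qed

lemma Kc_strict: "strict_mono Kc"
  unfolding strict_mono_def
proof (intro allI impI)
  fix x y :: real assume "x < y"
  then show "Kc x < Kc y"
    by (rule DERIV_pos_imp_increasing) (use Kc_deriv Kc_deriv_pos in blast)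
qed

lemma Kc_cont: "isCont Kc w"
  using Kc_deriv DERIV_isCont by blast

lemma Kc_surj: "surj Kc"
proof -
  have "\<exists>w. Kc w = y" for y
  proof -
    have a: "Kc (y - 1) \<le> y" using tanh_bound[of "y-1"] unfolding Kc_def abs_less_iff by linarith
    have b: "y \<le> Kc (y + 1)" using tanh_bound[of "y+1"] unfolding Kc_def abs_less_iff by linarith
    have c: "continuous_on {y-1..y+1} Kc" using Kc_cont by (simp add: continuous_at_imp_continuous_on)
    show ?thesis using IVT'[OF a b _ c] by auto
  qed
  then show ?thesis by (metis surjI)
qed

lemma Kc_inj: "inj Kc" using Kc_strict strict_mono_imp_inj_on by blast

lemma Kc_Kinv[simp]: "Kc (Kinv y) = y"
  unfolding Kinv_def using Kc_surj by (simp add: surj_f_inv_f)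

lemma Kinv_Kc[simp]: "Kinv (Kc w) = w"
  unfolding Kinv_def using Kc_inj by simp

lemma Kinv_strict: "strict_mono Kinv"
  unfolding strict_mono_def
proof (intro allI impI)
  fix x y :: real assume xy: "x < y"
  show "Kinv x < Kinv y"
  proof (rule ccontr)
    assume "\<not> Kinv x < Kinv y"
    then have "Kinv y \<le> Kinv x" by simp
    then have "Kc (Kinv y) \<le> Kc (Kinv x)" using Kc_strict by (metis strict_mono_less_eq)
    then show False using xy by simp
  qed
qed

lemma Kinv_bound: "\<bar>Kinv y - y\<bar> < 1"
proof -
  have "Kc (Kinv y) = y" by (rule Kc_Kinv)
  then have "Kinv y - y = (exp (Kinv y) - 1) / (exp (Kinv y) + 1)" unfolding Kc_def by linarith
  then show ?thesis using tanh_bound[of "Kinv y"] by (simp only:)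
qed

lemma Kinv_cont: "isCont Kinv y"
proof -
  have "isCont Kinv (Kc (Kinv y))"
    by (rule isCont_inverse_function[where d=1 and f=Kc and x="Kinv y"]) (simp_all add: Kc_cont)
  then show ?thesis by simp
qed

lemma Kinv_deriv: "(Kinv has_real_derivative inverse (1 - 2 * exp (Kinv y) / (exp (Kinv y) + 1)^2)) (at y)"
proof -
  have ne: "1 - 2 * exp (Kinv y) / (exp (Kinv y) + 1)^2 \<noteq> 0" using Kc_deriv_pos[of "Kinv y"] by linarith
  show ?thesis
    by (rule DERIV_inverse_function[where a="y-1" and b="y+1" and g=Kinv and x=y, OF Kc_deriv[of "Kinv y"] ne]) (simp_all add: Kinv_cont)
qed

lemma Kc0: "Kc 0 = 0" unfolding Kc_def by simp
lemma Kinv0: "Kinv 0 = 0" using Kinv_Kc[of 0] Kc0 by simp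

lemma exp_Lc: assumes "\<bar>z\<bar> < z0" shows "exp (Lc z0 z) = (z0 + z) / (z0 - z)"
proof -
  have "z0 + z > 0" "z0 - z > 0" using assms by auto
  then show ?thesis unfolding Lc_def by simp
qed

lemma Zc_Lc: assumes "\<bar>z\<bar> < z0" shows "Zc z0 (Lc z0 z) = z"
proof -
  have a: "z0 + z > 0" "z0 - z > 0" using assms by auto
  show ?thesis unfolding Zc_def exp_Lc[OF assms] using a by (simp add: field_simps)
qed

lemma Kc_Lc: assumes "\<bar>z\<bar> < z0" shows "Kc (Lc z0 z) = Lc z0 z - z / z0"
proof -
  have a: "z0 + z > 0" "z0 - z > 0" "z0 > 0" using assms by auto
  have "(exp (Lc z0 z) - 1) / (exp (Lc z0 z) + 1) = z / z0"
    unfolding exp_Lc[OF assms] using a by (simp add: field_simps)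
  then show ?thesis unfolding Kc_def by simp
qed

lemma Lc_Zc: assumes "z0 > 0" shows "Lc z0 (Zc z0 w) = w"
proof -
  have p: "exp w + 1 > 0" using exp_gt_zero[of w] by linarith
  have a1: "z0 + Zc z0 w = z0*(2*exp w)/(exp w+1)" unfolding Zc_def using p by (simp add: field_simps)
  have a2: "z0 - Zc z0 w = z0*2/(exp w+1)" unfolding Zc_def using p by (simp add: field_simps)
  have "(z0 + Zc z0 w) / (z0 - Zc z0 w) = exp w"
  proof -
    have y: "z0*2/(exp w+1) \<noteq> 0" using p assms by simp
    have "z0*(2*exp w)/(exp w+1) = exp w * (z0*2/(exp w+1))" by simp
    then show ?thesis unfolding a1 a2 using y by simp
  qed
  then show ?thesis unfolding Lc_def by simp
qed

lemma Zc_bound: assumes "z0 > 0" shows "\<bar>Zc z0 w\<bar> < z0"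
proof -
  have "z0 * \<bar>(exp w - 1) / (exp w + 1)\<bar> < z0 * 1"
    using tanh_bound[of w] assms by (intro mult_strict_left_mono) auto
  then show ?thesis unfolding Zc_def using assms by (simp add: abs_mult)
qed

lemma Zc_deriv: "(Zc z0 has_real_derivative z0 * (2 * exp w / (exp w + 1)^2)) (at w)"
proof -
  have p: "exp w + 1 \<noteq> 0" using exp_gt_zero[of w] by linarith
  show ?thesis
    unfolding Zc_def[abs_def]
    apply (rule DERIV_cong)
    apply (rule derivative_eq_intros refl | rule p)+
    using p apply (simp add: field_simps power2_eq_square)
    done
qed

lemma Zc_strict: assumes "z0 > 0" shows "strict_mono (Zc z0)"
  unfolding strict_mono_def
proof (intro allI impI)
  fix x y :: real assume "x < y"
  then show "Zc z0 x < Zc z0 y"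
  proof (rule DERIV_pos_imp_increasing)
    fix w :: real
    have "exp w + 1 > 0" using exp_gt_zero[of w] by linarith
    then have "z0 * (2 * exp w / (exp w + 1)^2) > 0" using assms by simp
    then show "\<exists>y. (Zc z0 has_real_derivative y) (at w) \<and> 0 < y" using Zc_deriv by blast
  qed
qed

lemma Zc_top: "(Zc z0 \<longlongrightarrow> z0) at_top"
  unfolding Zc_def by real_asymp

lemma Zc_bot: "(Zc z0 \<longlongrightarrow> -z0) at_bot"
  unfolding Zc_def by real_asymp



lemma cancel_l: "(D::real) \<noteq> 0 \<Longrightarrow> F \<noteq> 0 \<Longrightarrow> z0 \<noteq> 0 \<Longrightarrow> z0 * (2 * E / D) * ((D / F) * (a / 2 / z0)) = a * E / F"
  by (simp add: field_simps)

lemma cancel_r: "(D::real) \<noteq> 0 \<Longrightarrow> F \<noteq> 0 \<Longrightarrow> z \<noteq> 0 \<Longrightarrow> a * (4 * z * E / D) / (2 * z * F / D) / 2 = a * E / F"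
  by (simp add: field_simps)

lemma zg_deriv:
  assumes k: "k > 0" and z0: "z0 > 0" and e: "e = 1 \<or> e = -1"
  shows "((\<lambda>t. Zc z0 (Kinv ((e * sqrt k / 2 * t + c) / z0))) has_real_derivative
           Pc k z0 e (Zc z0 (Kinv ((e * sqrt k / 2 * t + c) / z0))) / 2) (at t)"
proof -
  have z0ne: "z0 \<noteq> 0" using z0 by simp
  have d1: "((\<lambda>t. (e * sqrt k / 2 * t + c) / z0) has_real_derivative e * sqrt k / 2 / z0) (at t)"
    apply (rule DERIV_cong)
    apply (rule derivative_eq_intros refl | rule z0ne)+
    using z0 apply simp
    done
  note d2 = DERIV_chain2[OF Kinv_deriv d1]
  note d3 = DERIV_chain2[OF Zc_deriv d2]
  define W where "W = Kinv ((e * sqrt k / 2 * t + c) / z0)"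
  define E where "E = exp W"
  have Ep: "E > 0" unfolding E_def by simp
  have E1: "E + 1 > 0" using Ep by simp
  have E2: "E^2 + 1 > 0" by (simp add: add_nonneg_pos)
  have inv: "inverse (1 - 2 * E / (E + 1)^2) = (E + 1)^2 / (E^2 + 1)"
  proof -
    have Dn: "(E + 1)^2 \<noteq> 0" using E1 by simp
    have a: "((E + 1)^2 - 2 * E) / (E + 1)^2 = 1 - 2 * E / (E + 1)^2"
      by (simp only: diff_divide_distrib divide_self[OF Dn])
    have b: "(E + 1)^2 - 2 * E = E^2 + 1" by (simp add: power2_eq_square algebra_simps)
    have "1 - 2 * E / (E + 1)^2 = (E^2 + 1) / (E + 1)^2" using a b by simp
    then show ?thesis by simp
  qed
  have Dn: "(E + 1)^2 \<noteq> 0" using E1 by simp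
  have zs: "z0^2 + (z0 * ((E - 1) / (E + 1)))^2 = 2 * z0^2 * (E^2 + 1) / (E + 1)^2"
    using Dn by (simp add: field_simps power_divide power_mult_distrib) (simp add: power2_eq_square algebra_simps)
  have zd: "z0^2 - (z0 * ((E - 1) / (E + 1)))^2 = 4 * z0^2 * E / (E + 1)^2"
    using Dn by (simp add: field_simps power_divide power_mult_distrib) (simp add: power2_eq_square algebra_simps)
  have eq: "z0 * (2 * E / (E + 1)^2) * (inverse (1 - 2 * E / (E + 1)^2) * (e * sqrt k / 2 / z0))
      = Pc k z0 e (Zc z0 W) / 2"
  proof -
    have l: "z0 * (2 * E / (E + 1)^2) * (inverse (1 - 2 * E / (E + 1)^2) * (e * sqrt k / 2 / z0))
       = e * sqrt k * E / (E^2 + 1)" unfolding inv using cancel_l[OF Dn _ , of "E^2+1" z0 E "e * sqrt k"] E2 z0 by simp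
    have z0s: "z0^2 > 0" using z0 by simp
    have "Pc k z0 e (Zc z0 W) / 2 = e * sqrt k * (4 * z0^2 * E / (E + 1)^2) / (2 * z0^2 * (E^2 + 1) / (E + 1)^2) / 2"
      unfolding Pc_def Zc_def E_def[symmetric] zs zd by simp
    also have "\<dots> = e * sqrt k * E / (E^2 + 1)" using cancel_r[OF Dn, of "E^2+1" "z0^2" "e * sqrt k" E] E2 z0s by simp
    finally have r: "Pc k z0 e (Zc z0 W) / 2 = e * sqrt k * E / (E^2 + 1)" .
    show ?thesis by (simp only: l r)
  qed
  show ?thesis using DERIV_cong[OF d3 eq[unfolded E_def W_def]] .
qed



lemma Kinv_ge: "Kinv y > y - 1" using Kinv_bound[of y] by linarith
lemma Kinv_le: "Kinv y < y + 1" using Kinv_bound[of y] by linarith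

lemma W_lims:
  fixes a b :: real assumes a: "a > 0"
  shows "filterlim (\<lambda>t. Kinv (a*t+b)) at_top at_top" "filterlim (\<lambda>t. Kinv (a*t+b)) at_bot at_bot"
    and "filterlim (\<lambda>t. Kinv ((-a)*t+b)) at_bot at_top" "filterlim (\<lambda>t. Kinv ((-a)*t+b)) at_top at_bot"
proof -
  show "filterlim (\<lambda>t. Kinv (a*t+b)) at_top at_top"
    unfolding filterlim_at_top eventually_at_top_linorder
  proof
    fix Z show "\<exists>N. \<forall>n\<ge>N. Z \<le> Kinv (a * n + b)"
    proof (intro exI allI impI)
      fix n assume "(Z+1-b)/a \<le> n"
      then have "Z+1-b \<le> a*n" using a by (simp add: pos_divide_le_eq mult.commute)
      then show "Z \<le> Kinv (a * n + b)" using Kinv_ge[of "a*n+b"] by linarith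
    qed
  qed
  show "filterlim (\<lambda>t. Kinv (a*t+b)) at_bot at_bot"
    unfolding filterlim_at_bot eventually_at_bot_linorder
  proof
    fix Z show "\<exists>N. \<forall>n\<le>N. Kinv (a * n + b) \<le> Z"
    proof (intro exI allI impI)
      fix n assume "n \<le> (Z-1-b)/a"
      then have "a*n \<le> Z-1-b" using a by (simp add: pos_le_divide_eq mult.commute)
      then show "Kinv (a * n + b) \<le> Z" using Kinv_le[of "a*n+b"] by linarith
    qed
  qed
  show "filterlim (\<lambda>t. Kinv ((-a)*t+b)) at_bot at_top"
    unfolding filterlim_at_bot eventually_at_top_linorder
  proof
    fix Z show "\<exists>N. \<forall>n\<ge>N. Kinv ((-a) * n + b) \<le> Z"
    proof (intro exI allI impI)
      fix n assume "(b-Z+1)/a \<le> n"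
      then have "b-Z+1 \<le> a*n" using a by (simp add: pos_divide_le_eq mult.commute)
      then show "Kinv ((-a) * n + b) \<le> Z" using Kinv_le[of "(-a)*n+b"] by linarith
    qed
  qed
  show "filterlim (\<lambda>t. Kinv ((-a)*t+b)) at_top at_bot"
    unfolding filterlim_at_top eventually_at_bot_linorder
  proof
    fix Z show "\<exists>N. \<forall>n\<le>N. Z \<le> Kinv ((-a) * n + b)"
    proof (intro exI allI impI)
      fix n assume "n \<le> (b-Z-1)/a"
      then have "a*n \<le> b-Z-1" using a by (simp add: pos_le_divide_eq mult.commute)
      then show "Z \<le> Kinv ((-a) * n + b)" using Kinv_ge[of "(-a)*n+b"] by linarith
    qed
  qed
qed

lemma ivt_zero:
  fixes p :: "real \<Rightarrow> real"
  assumes ab: "a \<le> b" and c: "continuous_on {a..b} p" and s: "p a * p b \<le> 0"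
  shows "\<exists>x. a \<le> x \<and> x \<le> b \<and> p x = 0"
proof -
  from s have "(p a \<le> 0 \<and> 0 \<le> p b) \<or> (0 \<le> p a \<and> p b \<le> 0)" by (auto simp: mult_le_0_iff)
  then show ?thesis
  proof
    assume "p a \<le> 0 \<and> 0 \<le> p b" then show ?thesis using IVT'[of p a 0 b] ab c by auto
  next
    assume "0 \<le> p a \<and> p b \<le> 0" then show ?thesis using IVT2'[of p b 0 a] ab c by auto
  qed
qed

lemma sign_const:
  fixes p :: "real \<Rightarrow> real"
  assumes iv: "is_interval I" and cont: "\<And>t. t \<in> I \<Longrightarrow> isCont p t"
    and nz: "\<And>t. t \<in> I \<Longrightarrow> p t \<noteq> 0" and t0: "t0 \<in> I" and t: "t \<in> I"
  shows "p t * p t0 > 0"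
proof (rule ccontr)
  assume "\<not> p t * p t0 > 0"
  then have neg: "p t * p t0 \<le> 0" by simp
  define a where "a = min t t0"
  define b where "b = max t t0"
  have ab: "a \<le> b" unfolding a_def b_def by simp
  have sub: "{a..b} \<subseteq> I"
  proof
    fix x assume "x \<in> {a..b}"
    then have "a \<le> x" "x \<le> b" by auto
    moreover have "a \<in> I" "b \<in> I" unfolding a_def b_def using t t0 by (auto simp: min_def max_def)
    ultimately show "x \<in> I" using iv unfolding is_interval_1 by blast
  qed
  have c: "continuous_on {a..b} p" using sub cont by (intro continuous_at_imp_continuous_on) auto
  have "p a * p b \<le> 0" unfolding a_def b_def using neg by (cases "t \<le> t0") (auto simp: min_def max_def mult.commute)
  then obtain x where "a \<le> x" "x \<le> b" "p x = 0" using ivt_zero[OF ab c] by blast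
  moreover have "x \<in> I" using sub \<open>a \<le> x\<close> \<open>x \<le> b\<close> by auto
  ultimately show False using nz by blast
qed



lemma cancel_pR: "(B::real) \<noteq> 0 \<Longrightarrow> z0 \<noteq> 0 \<Longrightarrow> R \<noteq> 0 \<Longrightarrow>
   - Z * (s * (z0 * R^2 / 2) / B) / (z0 * R) = - s * Z * R / (2 * B)"
  by (simp add: field_simps power2_eq_square)

lemma Q_alg: "(A::real) \<noteq> 0 \<Longrightarrow> B \<noteq> 0 \<Longrightarrow> A + B = 2 * z0^2 \<Longrightarrow>
  z0 * (2 * z0 * (s * A / B / 2) / A) - s * A / B / 2 - s / 2 = 0"
proof -
  assume a: "A \<noteq> 0" "B \<noteq> 0" "A + B = 2 * z0^2"
  have "z0 * (2 * z0 * (s * A / B / 2) / A) - s * A / B / 2 - s / 2 = s * (2 * z0^2 - A - B) / (2 * B)"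
    using a(1,2) by (simp add: field_simps power2_eq_square)
  then show ?thesis using a(3) by simp
qed

theorem theorem6:
  fixes k :: real and I :: "real set" and r \<theta> z pR pS :: "real \<Rightarrow> real" and t0 :: real
  assumes "k > 0"
    and "maximal_solution k I r \<theta> z pR pS"
    and "t0 \<in> I"
    and "sqrt (k^2 + 2 * Hf k (r t0) (z t0) (pR t0) (pS t0) * F3f k (r t0) (z t0) (pR t0) (pS t0)) = 0"
  shows "let z0 = k / (4 * \<bar>Hf k (r t0) (z t0) (pR t0) (pS t0)\<bar>) in
     I = UNIV
     \<and> (\<forall>t. \<bar>z t\<bar> < z0 \<and> r t = sqrt (2 * (z0^2 - (z t)^2) / z0))
     \<and> (\<exists>t1. z t1 = 0 \<and> (\<forall>t. \<theta> t = ln ((z0 + z t) / (z0 - z t)) / 2 + \<theta> t1))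
     \<and> ((strict_mono z \<and> strict_mono \<theta>
           \<and> (z \<longlongrightarrow> z0) at_top \<and> (z \<longlongrightarrow> - z0) at_bot)
        \<or> (strict_mono (\<lambda>t. - z t) \<and> strict_mono (\<lambda>t. - \<theta> t)
           \<and> (z \<longlongrightarrow> - z0) at_top \<and> (z \<longlongrightarrow> z0) at_bot))"
proof -
  note k = assms(1) and t0 = assms(3)
  have iv: "is_interval I" and op: "open I" and sol: "is_solution k I r \<theta> z pR pS"
    and maxl: "\<And>J r' \<theta>' z' pR' pS'. is_interval J \<Longrightarrow> open J \<Longrightarrow> I \<subseteq> J
        \<Longrightarrow> is_solution k J r' \<theta>' z' pR' pS'
        \<Longrightarrow> (\<forall>t\<in>I. r' t = r t \<and> \<theta>' t = \<theta> t \<and> z' t = z t \<and> pR' t = pR t \<and> pS' t = pS t)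
        \<Longrightarrow> J = I"
    using assms(2) unfolding maximal_solution_def by blast+
  have solt: "r t > 0 \<and> (r has_real_derivative pR t) (at t)
        \<and> (\<theta> has_real_derivative pS t / (r t)^2) (at t)
        \<and> (z has_real_derivative pS t / 2) (at t)" if "t \<in> I" for t
    using sol that unfolding is_solution_def by blast
  define h where "h = Hf k (r t0) (z t0) (pR t0) (pS t0)"
  define f where "f = F3f k (r t0) (z t0) (pR t0) (pS t0)"
  have J0: "k^2 + 2*h*f = 0" using assms(4) unfolding h_def f_def by simp
  obtain cH where cH: "\<forall>t\<in>I. Hf k (r t) (z t) (pR t) (pS t) = cH" using conserved(1)[OF sol iv] by blast
  obtain cF where cF: "\<forall>t\<in>I. F3f k (r t) (z t) (pR t) (pS t) = cF" using conserved(2)[OF sol iv] by blast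
  have Ht: "Hf k (r t) (z t) (pR t) (pS t) = h" if "t \<in> I" for t using cH that t0 unfolding h_def by metis
  have Ft: "F3f k (r t) (z t) (pR t) (pS t) = f" if "t \<in> I" for t using cF that t0 unfolding f_def by metis
  have PW: "h < 0 \<and> \<bar>z t\<bar> < -k/(4*h) \<and> (r t)^2 = 2*((-k/(4*h))^2-(z t)^2)/(-k/(4*h))
     \<and> (pS t)^2 = k*(((-k/(4*h))^2-(z t)^2)/((-k/(4*h))^2+(z t)^2))^2 \<and> pR t = - z t*pS t/((-k/(4*h))*r t)"
    if "t \<in> I" for t
    using pointwise[OF k conjunct1[OF solt[OF that]] Ht[OF that, symmetric]] J0 Ft[OF that] by simp
  have hneg: "h < 0" using PW[OF t0] by simp
  define z0 where "z0 = -k/(4*h)"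
  have z0p: "z0 > 0" unfolding z0_def using hneg k by (simp add: divide_pos_neg)
  have z0eq: "k / (4 * \<bar>Hf k (r t0) (z t0) (pR t0) (pS t0)\<bar>) = z0"
    unfolding h_def[symmetric] z0_def using hneg by simp
  have zt: "\<bar>z t\<bar> < z0" and r2: "(r t)^2 = 2*(z0^2 - (z t)^2)/z0"
    and p2: "(pS t)^2 = k*((z0^2 - (z t)^2)/(z0^2 + (z t)^2))^2"
    and pRt: "pR t = - z t * pS t / (z0 * r t)" if "t \<in> I" for t
    using PW[OF that] unfolding z0_def[symmetric] by auto
  have rp: "r t > 0" if "t \<in> I" for t using solt[OF that] by blast
  have Ap: "z0^2 - (z t)^2 > 0" if "t \<in> I" for t
  proof -
    have "\<bar>z t\<bar>^2 < z0^2" using zt[OF that] by (intro power_strict_mono) auto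
    then show ?thesis by simp
  qed
  have Bp: "z0^2 + (z t)^2 > 0" for t using z0p by (simp add: add_pos_nonneg)
  have rRc: "r t = Rc z0 (z t)" if "t \<in> I" for t
  proof -
    have "sqrt ((r t)^2) = r t" using rp[OF that] by simp
    then show ?thesis unfolding Rc_def r2[OF that, symmetric] by simp
  qed
  have pabs: "\<bar>pS t\<bar> = sqrt k * ((z0^2 - (z t)^2)/(z0^2 + (z t)^2))" if "t \<in> I" for t
  proof -
    have q: "(z0^2 - (z t)^2)/(z0^2 + (z t)^2) > 0" using Ap[OF that] Bp[of t] by simp
    have "sqrt ((pS t)^2) = sqrt k * sqrt ((((z0^2 - (z t)^2)/(z0^2 + (z t)^2)))^2)"
      unfolding p2[OF that] by (simp add: real_sqrt_mult)
    then show ?thesis using q Ap[OF that] by simp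
  qed
  have pnz: "pS t \<noteq> 0" if "t \<in> I" for t
  proof -
    have "(z0^2 - (z t)^2)/(z0^2 + (z t)^2) > 0" using Ap[OF that] Bp[of t] by simp
    then have "\<bar>pS t\<bar> > 0" unfolding pabs[OF that] using k by (simp only: mult_pos_pos real_sqrt_gt_zero)
    then show ?thesis by simp
  qed
  have pcont: "isCont pS t" if "t \<in> I" for t
    using sol that unfolding is_solution_def by (blast intro: DERIV_isCont)
  define e :: real where "e = (if pS t0 > 0 then 1 else -1)"
  have e: "e = 1 \<or> e = -1" unfolding e_def by simp
  have pSe: "pS t = Pc k z0 e (z t)" if "t \<in> I" for t
  proof -
    have sg: "pS t * pS t0 > 0" by (rule sign_const[OF iv pcont pnz t0 that])
    have "pS t = e * \<bar>pS t\<bar>"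
    proof (cases "pS t0 > 0")
      case True
      then have "pS t > 0" using sg by (simp add: zero_less_mult_iff)
      then show ?thesis unfolding e_def using True by simp
    next
      case False
      then have "pS t0 < 0" using pnz[OF t0] by linarith
      then have "pS t < 0" using sg by (simp add: zero_less_mult_iff)
      then show ?thesis unfolding e_def using False by simp
    qed
    then show ?thesis unfolding pabs[OF that] Pc_def by simp
  qed
  have pRe: "pR t = PRc k z0 e (z t)" if "t \<in> I" for t
  proof -
    have Ar: "z0^2 - (z t)^2 = z0 * (r t)^2 / 2" using r2[OF that] z0p by (simp add: field_simps)
    have "pR t = - z t * (e * sqrt k * (z0 * (r t)^2 / 2) / (z0^2 + (z t)^2)) / (z0 * r t)"
      unfolding pRt[OF that] pSe[OF that] Pc_def Ar ..
    also have "\<dots> = - e * sqrt k * z t * r t / (2 * (z0^2 + (z t)^2))"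
      using cancel_pR[of "z0^2 + (z t)^2" z0 "r t" "z t" "e * sqrt k"] rp[OF that] z0p Bp[of t] by simp
    finally show ?thesis unfolding PRc_def rRc[OF that] .
  qed
  have dz: "(z has_real_derivative Pc k z0 e (z t) / 2) (at t)" if "t \<in> I" for t
    using solt[OF that] pSe[OF that] by simp
  have dL: "((\<lambda>t. Lc z0 (z t)) has_real_derivative 2*z0*(Pc k z0 e (z t) / 2)/(z0^2 - (z t)^2)) (at t)"
    if "t \<in> I" for t
    by (rule Lc_deriv) (use zt[OF that] dz[OF that] in auto)
  have cv: "convex I" using iv by (simp add: is_interval_convex)
  have dQ: "((\<lambda>t. z0 * Lc z0 (z t) - z t - e * sqrt k / 2 * t) has_real_derivative 0) (at t)"
    if "t \<in> I" for t
  proof -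
    have d: "((\<lambda>t. z0 * Lc z0 (z t) - z t - e * sqrt k / 2 * t) has_real_derivative
        z0 * (2*z0*(Pc k z0 e (z t) / 2)/(z0^2 - (z t)^2)) - Pc k z0 e (z t) / 2 - e * sqrt k / 2) (at t)"
      using DERIV_diff[OF DERIV_diff[OF DERIV_cmult[OF dL[OF that], of z0] dz[OF that]] DERIV_cmult_Id[of "e * sqrt k / 2" t]]
      by simp
    have "z0 * (2*z0*(Pc k z0 e (z t) / 2)/(z0^2 - (z t)^2)) - Pc k z0 e (z t) / 2 - e * sqrt k / 2 = 0"
      unfolding Pc_def by (rule Q_alg) (use Ap[OF that] Bp[of t] in auto)
    then show ?thesis using DERIV_cong[OF d] by blast
  qed
  have "\<exists>c. \<forall>t\<in>I. z0 * Lc z0 (z t) - z t - e * sqrt k / 2 * t = c"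
    by (rule has_field_derivative_zero_constant[OF cv]) (rule has_field_derivative_at_within, rule dQ, assumption)
  then obtain c0 where c0: "\<forall>t\<in>I. z0 * Lc z0 (z t) - z t - e * sqrt k / 2 * t = c0" by blast
  have dT: "((\<lambda>t. \<theta> t - Lc z0 (z t) / 2) has_real_derivative 0) (at t)" if "t \<in> I" for t
  proof -
    have d: "((\<lambda>t. \<theta> t - Lc z0 (z t) / 2) has_real_derivative
        pS t / (r t)^2 - 2*z0*(Pc k z0 e (z t) / 2)/(z0^2 - (z t)^2) / 2) (at t)"
      using DERIV_diff[OF conjunct1[OF conjunct2[OF conjunct2[OF solt[OF that]]]] DERIV_cdivide[OF dL[OF that], of 2]] by simp
    have "pS t / (r t)^2 - 2*z0*(Pc k z0 e (z t) / 2)/(z0^2 - (z t)^2) / 2 = 0"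
      unfolding r2[OF that] pSe[OF that] using Ap[OF that] z0p by (simp add: field_simps)
    then show ?thesis using DERIV_cong[OF d] by blast
  qed
  have "\<exists>c. \<forall>t\<in>I. \<theta> t - Lc z0 (z t) / 2 = c"
    by (rule has_field_derivative_zero_constant[OF cv]) (rule has_field_derivative_at_within, rule dT, assumption)
  then obtain thc where thc: "\<forall>t\<in>I. \<theta> t - Lc z0 (z t) / 2 = thc" by blast
  define zg where "zg = (\<lambda>t. Zc z0 (Kinv ((e * sqrt k / 2 * t + c0) / z0)))"
  have zgz: "zg t = z t" if "t \<in> I" for t
  proof -
    have "Kc (Lc z0 (z t)) = (e * sqrt k / 2 * t + c0) / z0"
      unfolding Kc_Lc[OF zt[OF that]] using c0 that z0p by (auto simp: field_simps)
    then have "Kinv ((e * sqrt k / 2 * t + c0) / z0) = Lc z0 (z t)" by (metis Kinv_Kc)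
    then show ?thesis unfolding zg_def using Zc_Lc[OF zt[OF that]] by simp
  qed
  have gsol: "is_solution k UNIV (\<lambda>t. Rc z0 (zg t)) (\<lambda>t. thc + Lc z0 (zg t) / 2) zg
           (\<lambda>t. PRc k z0 e (zg t)) (\<lambda>t. Pc k z0 e (zg t))"
    by (rule curve_solution[OF k z0p e]) (unfold zg_def, intro conjI Zc_bound[OF z0p] zg_deriv[OF k z0p e])
  have agree: "\<forall>t\<in>I. Rc z0 (zg t) = r t \<and> thc + Lc z0 (zg t) / 2 = \<theta> t \<and> zg t = z t
       \<and> PRc k z0 e (zg t) = pR t \<and> Pc k z0 e (zg t) = pS t"
    using zgz rRc pRe pSe thc by fastforce
  have Iu: "UNIV = I" by (rule maxl[OF _ _ _ gsol agree]) auto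
  have all: "t \<in> I" for t using Iu by blast
  define a where "a = sqrt k / (2 * z0)"
  define b where "b = c0 / z0"
  have ap: "a > 0" unfolding a_def using k z0p by simp
  have Wa: "(e * sqrt k / 2 * t + c0) / z0 = e * a * t + b" for t
    unfolding a_def b_def using z0p by (simp add: field_simps)
  have zW: "z t = Zc z0 (Kinv (e * a * t + b))" for t
    using zgz[OF all, of t] unfolding zg_def Wa by simp
  have thW: "\<theta> t = thc + Kinv (e * a * t + b) / 2" for t
  proof -
    have "\<theta> t = thc + Lc z0 (z t) / 2" using thc all[of t] by force
    then show ?thesis unfolding zW Lc_Zc[OF z0p] .
  qed
  have C2: "\<forall>t. \<bar>z t\<bar> < z0 \<and> r t = sqrt (2 * (z0^2 - (z t)^2) / z0)"
    using zt[OF all] rRc[OF all] unfolding Rc_def by blast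
  have C3: "\<exists>t1. z t1 = 0 \<and> (\<forall>t. \<theta> t = ln ((z0 + z t) / (z0 - z t)) / 2 + \<theta> t1)"
  proof -
    have ea: "e * a \<noteq> 0" using e ap by auto
    define t1 where "t1 = - b / (e * a)"
    have "e * a * t1 + b = 0" unfolding t1_def using ea by simp
    then have z1: "z t1 = 0" unfolding zW by (simp add: Kinv0 Zc_def)
    have th1: "\<theta> t1 = thc" using thc all[of t1] z1 unfolding Lc_def using z0p by force
    have "\<theta> t = ln ((z0 + z t) / (z0 - z t)) / 2 + \<theta> t1" for t
      using thc all[of t] th1 unfolding Lc_def by force
    then show ?thesis using z1 by blast
  qed
  have C4: "(strict_mono z \<and> strict_mono \<theta> \<and> (z \<longlongrightarrow> z0) at_top \<and> (z \<longlongrightarrow> - z0) at_bot)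
        \<or> (strict_mono (\<lambda>t. - z t) \<and> strict_mono (\<lambda>t. - \<theta> t)
           \<and> (z \<longlongrightarrow> - z0) at_top \<and> (z \<longlongrightarrow> z0) at_bot)"
    using e
  proof
    assume e1: "e = 1"
    have zf: "z = (\<lambda>t. Zc z0 (Kinv (a * t + b)))" using zW e1 by (intro ext) simp
    have tf: "\<theta> = (\<lambda>t. thc + Kinv (a * t + b) / 2)" using thW e1 by (intro ext) simp
    have m1: "Kinv (a * x + b) < Kinv (a * y + b)" if "x < y" for x y
      using strict_monoD[OF Kinv_strict] that ap by simp
    have "strict_mono z" unfolding zf strict_mono_def using m1 strict_monoD[OF Zc_strict[OF z0p]] by blast
    moreover have "strict_mono \<theta>" unfolding tf strict_mono_def using m1 by simp
    moreover have "(z \<longlongrightarrow> z0) at_top" unfolding zf by (rule filterlim_compose[OF Zc_top W_lims(1)[OF ap]])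
    moreover have "(z \<longlongrightarrow> - z0) at_bot" unfolding zf by (rule filterlim_compose[OF Zc_bot W_lims(2)[OF ap]])
    ultimately show ?thesis by blast
  next
    assume e1: "e = -1"
    have zf: "z = (\<lambda>t. Zc z0 (Kinv ((-a) * t + b)))" using zW e1 by (intro ext) simp
    have tf: "\<theta> = (\<lambda>t. thc + Kinv ((-a) * t + b) / 2)" using thW e1 by (intro ext) simp
    have m1: "Kinv ((-a) * y + b) < Kinv ((-a) * x + b)" if "x < y" for x y
      using strict_monoD[OF Kinv_strict] that ap by simp
    have "strict_mono (\<lambda>t. - z t)" unfolding zf strict_mono_def using m1 strict_monoD[OF Zc_strict[OF z0p]] by fastforce
    moreover have "strict_mono (\<lambda>t. - \<theta> t)" unfolding tf strict_mono_def using m1 by simp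
    moreover have "(z \<longlongrightarrow> - z0) at_top" unfolding zf by (rule filterlim_compose[OF Zc_bot W_lims(3)[OF ap]])
    moreover have "(z \<longlongrightarrow> z0) at_bot" unfolding zf by (rule filterlim_compose[OF Zc_top W_lims(4)[OF ap]])
    ultimately show ?thesis by blast
  qed
  show ?thesis unfolding z0eq Let_def using Iu C2 C3 C4 by auto
qed


end
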